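(* Let $\sigma>0$, $k>0$, $\alpha\geq 0$, $\lambda\in\mathbb{R}$, and consider the linear parabolic partial differential equation for $u=u(t,x)$, $x>0$, $$u_t=\tfrac12\sigma^2x^2u_{xx}+kx(\alpha-x)u_x+\lambda x^2u .$$ Suppose $\alpha\neq0$ or $\lambda\neq\frac{k^2}{2\sigma^2}$. Then the Lie algebra of infinitesimal (point) symmetries of this equation is spanned by the two vector fields $V_1=\partial_t$ and $V_6=u\partial_u$, together with the infinite-dimensional subalgebra of vector fields $V_\varphi=\varphi(t,x)\partial_u$, where $\varphi(t,x)$ is an arbitrary solution of the equation.
   Context: An infinitesimal symmetry is a vector field $V=\tau(t,x,u)\partial_t+\xi(t,x,u)\partial_x+\phi(t,x,u)\partial_u$ generating a one-parameter group of transformations of $(t,x,u)$ that maps solutions of the equation to solutions; equivalently, the second prolongation of $V$ applied to $\tfrac12\sigma^2x^2u_{xx}+kx(\alpha-x)u_x+\lambda x^2u-u_t$ vanishes on solutions of the equation. *)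

theory Defs
  imports "HOL-Analysis.Analysis"
begin

type_synonym pt = "real \<times> real \<times> real"

definition Dom :: "pt set" where
  "Dom = {(t, x, u). x > 0}"

(* coordinate i (0 = t, 1 = x, 2 = u) of a point, and the point with coordinate i replaced by s *)
definition coord :: "nat \<Rightarrow> pt \<Rightarrow> real" where
  "coord i p = (case p of (t, x, u) \<Rightarrow> if i = 0 then t else if i = 1 then x else u)"

definition along :: "nat \<Rightarrow> pt \<Rightarrow> real \<Rightarrow> pt" where
  "along i p s = (case p of (t, x, u) \<Rightarrow>
      if i = 0 then (s, x, u) else if i = 1 then (t, s, u) else (t, x, s))"

definition pd :: "nat \<Rightarrow> (pt \<Rightarrow> real) \<Rightarrow> pt \<Rightarrow> real" where
  "pd i f p = deriv (\<lambda>s. f (along i p s)) (coord i p)"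

fun ipd :: "nat list \<Rightarrow> (pt \<Rightarrow> real) \<Rightarrow> pt \<Rightarrow> real" where
  "ipd [] f = f"
| "ipd (i # is) f = pd i (ipd is f)"

definition smooth_on :: "pt set \<Rightarrow> (pt \<Rightarrow> real) \<Rightarrow> bool" where
  "smooth_on S f \<longleftrightarrow>
     (\<forall>is. set is \<subseteq> {0, 1, 2} \<longrightarrow>
        continuous_on S (ipd is f) \<and>
        (\<forall>p\<in>S. \<forall>i<3. (\<lambda>s. ipd is f (along i p s)) differentiable (at (coord i p))))"

definition Delta :: "real \<Rightarrow> real \<Rightarrow> real \<Rightarrow> real \<Rightarrow> real
      \<Rightarrow> real \<Rightarrow> real \<Rightarrow> real \<Rightarrow> real \<Rightarrow> real" where
  "Delta \<sigma> k \<alpha> lam x u ut ux uxx =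
     1/2 * \<sigma>^2 * x^2 * uxx + k * x * (\<alpha> - x) * ux + lam * x^2 * u - ut"

(* Prolongation coefficients phi^t, phi^x, phi^xx (Olver's formulas) of
   V = tau d_t + xi d_x + phi d_u, at the point p with jet coordinates ut, ux, uxx, uxt. *)
definition phi_t :: "(pt \<Rightarrow> real) \<Rightarrow> (pt \<Rightarrow> real) \<Rightarrow> (pt \<Rightarrow> real) \<Rightarrow> pt
      \<Rightarrow> real \<Rightarrow> real \<Rightarrow> real" where
  "phi_t \<tau> \<xi> \<phi> p ut ux =
     pd 0 \<phi> p - pd 0 \<xi> p * ux + (pd 2 \<phi> p - pd 0 \<tau> p) * ut
     - pd 2 \<xi> p * ux * ut - pd 2 \<tau> p * ut^2"

definition phi_x :: "(pt \<Rightarrow> real) \<Rightarrow> (pt \<Rightarrow> real) \<Rightarrow> (pt \<Rightarrow> real) \<Rightarrow> pt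
      \<Rightarrow> real \<Rightarrow> real \<Rightarrow> real" where
  "phi_x \<tau> \<xi> \<phi> p ut ux =
     pd 1 \<phi> p + (pd 2 \<phi> p - pd 1 \<xi> p) * ux - pd 1 \<tau> p * ut
     - pd 2 \<xi> p * ux^2 - pd 2 \<tau> p * ux * ut"

definition phi_xx :: "(pt \<Rightarrow> real) \<Rightarrow> (pt \<Rightarrow> real) \<Rightarrow> (pt \<Rightarrow> real) \<Rightarrow> pt
      \<Rightarrow> real \<Rightarrow> real \<Rightarrow> real \<Rightarrow> real \<Rightarrow> real" where
  "phi_xx \<tau> \<xi> \<phi> p ut ux uxx uxt =
     ipd [1,1] \<phi> p + (2 * ipd [1,2] \<phi> p - ipd [1,1] \<xi> p) * ux - ipd [1,1] \<tau> p * ut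
     + (ipd [2,2] \<phi> p - 2 * ipd [1,2] \<xi> p) * ux^2 - 2 * ipd [1,2] \<tau> p * ux * ut
     - ipd [2,2] \<xi> p * ux^3 - ipd [2,2] \<tau> p * ux^2 * ut
     + (pd 2 \<phi> p - 2 * pd 1 \<xi> p) * uxx - 2 * pd 1 \<tau> p * uxt
     - 3 * pd 2 \<xi> p * ux * uxx - pd 2 \<tau> p * ut * uxx - 2 * pd 2 \<tau> p * ux * uxt"

(* pr^(2) V applied to Delta (Delta has no explicit t-dependence) *)
definition prV_Delta :: "real \<Rightarrow> real \<Rightarrow> real \<Rightarrow> real \<Rightarrow>
      (pt \<Rightarrow> real) \<Rightarrow> (pt \<Rightarrow> real) \<Rightarrow> (pt \<Rightarrow> real) \<Rightarrow> pt
      \<Rightarrow> real \<Rightarrow> real \<Rightarrow> real \<Rightarrow> real \<Rightarrow> real" where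
  "prV_Delta \<sigma> k \<alpha> lam \<tau> \<xi> \<phi> p ut ux uxx uxt =
     (case p of (t, x, u) \<Rightarrow>
        \<xi> p * (\<sigma>^2 * x * uxx + k * (\<alpha> - 2 * x) * ux + 2 * lam * x * u)
      + \<phi> p * (lam * x^2)
      + phi_t \<tau> \<xi> \<phi> p ut ux * (-1)
      + phi_x \<tau> \<xi> \<phi> p ut ux * (k * x * (\<alpha> - x))
      + phi_xx \<tau> \<xi> \<phi> p ut ux uxx uxt * (1/2 * \<sigma>^2 * x^2))"

definition is_inf_symmetry :: "real \<Rightarrow> real \<Rightarrow> real \<Rightarrow> real \<Rightarrow>
      (pt \<Rightarrow> real) \<Rightarrow> (pt \<Rightarrow> real) \<Rightarrow> (pt \<Rightarrow> real) \<Rightarrow> bool" where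
  "is_inf_symmetry \<sigma> k \<alpha> lam \<tau> \<xi> \<phi> \<longleftrightarrow>
     (\<forall>t x u ut ux uxx uxt. x > 0 \<longrightarrow>
        Delta \<sigma> k \<alpha> lam x u ut ux uxx = 0 \<longrightarrow>
        prV_Delta \<sigma> k \<alpha> lam \<tau> \<xi> \<phi> (t, x, u) ut ux uxx uxt = 0)"

definition is_solution :: "real \<Rightarrow> real \<Rightarrow> real \<Rightarrow> real \<Rightarrow> (real \<Rightarrow> real \<Rightarrow> real) \<Rightarrow> bool" where
  "is_solution \<sigma> k \<alpha> lam w \<longleftrightarrow>
     (let W = (\<lambda>(t, x, u). w t x) in
      smooth_on Dom W \<and>
      (\<forall>t x u. x > 0 \<longrightarrow>
         Delta \<sigma> k \<alpha> lam x (W (t,x,u)) (pd 0 W (t,x,u)) (pd 1 W (t,x,u)) (ipd [1,1] W (t,x,u)) = 0))"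

end

theory Submission
  imports Defs "HOL-Real_Asymp.Real_Asymp"
begin


lemma along_simps[simp]:
  "along 0 (t,x,u) s = (s,x,u)" "along (Suc 0) (t,x,u) s = (t,s,u)" "along 2 (t,x,u) s = (t,x,s)"
  "coord 0 (t,x,u) = t" "coord (Suc 0) (t,x,u) = x" "coord 2 (t,x,u) = u"
  by (simp_all add: along_def coord_def)

lemma Dom_iff[simp]: "(t,x,u) \<in> Dom \<longleftrightarrow> 0 < x"
  by (simp add: Dom_def)

lemma DomI: "(\<And>t x u. 0 < x \<Longrightarrow> P (t,x,u)) \<Longrightarrow> \<forall>q\<in>Dom. P q"
  by (auto simp: Dom_def)

lemma pd_cong:
  assumes "\<forall>q\<in>Dom. f q = g q" "p \<in> Dom"
  shows "pd i f p = pd i g p"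
proof -
  obtain t x u where p: "p = (t,x,u)" by (cases p) auto
  have x: "x > 0" using assms(2) p by simp
  have ev: "eventually (\<lambda>s. f (along i p s) = g (along i p s)) (nhds (coord i p))"
  proof (cases "i = 1")
    case True
    have "eventually (\<lambda>s. s \<in> {0<..}) (nhds x)"
      by (rule eventually_nhds_in_open) (use x in auto)
    then show ?thesis using True p assms(1)
      by (auto elim!: eventually_mono)
  next
    case False
    then show ?thesis using p assms(1) x
      by (auto simp: along_def)
  qed
  show ?thesis unfolding pd_def by (rule deriv_cong_ev[OF ev refl])
qed

lemma ipd_cong:
  assumes "\<forall>q\<in>Dom. f q = g q"
  shows "p \<in> Dom \<Longrightarrow> ipd is f p = ipd is g p"
proof (induction "is" arbitrary: p)
  case Nil then show ?case using assms by simp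
next
  case (Cons i "is")
  have "\<forall>q\<in>Dom. ipd is f q = ipd is g q" using Cons.IH by blast
  then show ?case using Cons.prems by (simp add: pd_cong)
qed

lemma pd_zero:
  assumes "\<forall>q\<in>Dom. f q = 0" "p \<in> Dom"
  shows "pd i f p = 0"
proof -
  have "pd i f p = pd i (\<lambda>_. 0) p" by (rule pd_cong[OF assms])
  also have "\<dots> = 0" by (simp add: pd_def)
  finally show ?thesis .
qed

lemma smooth_DERIV:
  assumes "smooth_on Dom g" "p \<in> Dom" "i < 3" "set is \<subseteq> {0,1,2}"
  shows "((\<lambda>s. ipd is g (along i p s)) has_real_derivative ipd (i#is) g p) (at (coord i p))"
proof -
  have "(\<lambda>s. ipd is g (along i p s)) differentiable (at (coord i p))"
    using assms unfolding smooth_on_def by blast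
  then show ?thesis
    by (simp add: pd_def DERIV_deriv_iff_real_differentiable[symmetric])
qed

lemma smooth_D0:
  assumes "smooth_on Dom g" "0 < x" "set is \<subseteq> {0,1,2}"
  shows "((\<lambda>s. ipd is g (s,x,u)) has_real_derivative ipd (0#is) g (t,x,u)) (at t)"
  using smooth_DERIV[OF assms(1) _ _ assms(3), of "(t,x,u)" 0] assms(2) by simp

lemma smooth_D1:
  assumes "smooth_on Dom g" "0 < x" "set is \<subseteq> {0,1,2}"
  shows "((\<lambda>s. ipd is g (t,s,u)) has_real_derivative ipd (1#is) g (t,x,u)) (at x)"
  using smooth_DERIV[OF assms(1) _ _ assms(3), of "(t,x,u)" 1] assms(2) by simp

lemma smooth_D2:
  assumes "smooth_on Dom g" "0 < x" "set is \<subseteq> {0,1,2}"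
  shows "((\<lambda>s. ipd is g (t,x,s)) has_real_derivative ipd (2#is) g (t,x,u)) (at u)"
  using smooth_DERIV[OF assms(1) _ _ assms(3), of "(t,x,u)" 2] assms(2) by simp

lemma DERIV_local:
  assumes "(F has_real_derivative D) (at x)" "(G has_real_derivative E) (at x)" "0 < x"
    "\<And>y. 0 < y \<Longrightarrow> F y = G y"
  shows "D = E"
proof -
  have "(G has_real_derivative D) (at x)"
    by (rule has_field_derivative_transform_within_open[OF assms(1), of "{0<..}"]) (use assms in auto)
  then show ?thesis using assms(2) by (rule DERIV_unique)
qed

lemma const_pos:
  fixes F :: "real \<Rightarrow> real"
  assumes "\<And>y. 0 < y \<Longrightarrow> (F has_real_derivative 0) (at y)" "0 < x" "0 < y"
  shows "F x = F y"
proof -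
  obtain c where "\<forall>z\<in>{0<..}. F z = c"
    using has_field_derivative_zero_constant[of "{0<..}" F] assms(1)
    by (metis convex_real_interval(3) greaterThan_iff has_field_derivative_at_within)
  then show ?thesis using assms by auto
qed



lemma S0:
  assumes "is_inf_symmetry \<sigma> k \<alpha> lam \<tau> \<xi> \<phi>" "0 < x"
  shows "prV_Delta \<sigma> k \<alpha> lam \<tau> \<xi> \<phi> (t,x,u)
     (1/2 * \<sigma>^2 * x^2 * uxx + k * x * (\<alpha> - x) * ux + lam * x^2 * u) ux uxx uxt = 0"
  using assms unfolding is_inf_symmetry_def Delta_def by auto

lemma jet_tau:
  assumes "is_inf_symmetry \<sigma> k \<alpha> lam \<tau> \<xi> \<phi>" "0 < x" "0 < \<sigma>"
  shows "pd 1 \<tau> (t,x,u) = 0 \<and> pd 2 \<tau> (t,x,u) = 0"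
proof -
  let ?S = "\<lambda>ux uxx uxt. prV_Delta \<sigma> k \<alpha> lam \<tau> \<xi> \<phi> (t,x,u)
     (1/2 * \<sigma>^2 * x^2 * uxx + k * x * (\<alpha> - x) * ux + lam * x^2 * u) ux uxx uxt"
  have S: "\<And>a b c. ?S a b c = 0" using S0[OF assms(1,2)] by blast
  have "?S 0 0 1 - ?S 0 0 0 = -(\<sigma>^2 * x^2 * pd 1 \<tau> (t,x,u))"
    by (simp add: prV_Delta_def phi_t_def phi_x_def phi_xx_def algebra_simps)
  then have "\<sigma>^2 * x^2 * pd 1 \<tau> (t,x,u) = 0" using S[where a=0 and b=0 and c=1] S[where a=0 and b=0 and c=0] by linarith
  then have 1: "pd 1 \<tau> (t,x,u) = 0" using assms by simp
  have "?S 1 0 1 - ?S 1 0 0 = -(\<sigma>^2 * x^2 * (pd 1 \<tau> (t,x,u) + pd 2 \<tau> (t,x,u)))"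
    by (simp add: prV_Delta_def phi_t_def phi_x_def phi_xx_def algebra_simps)
  then have "\<sigma>^2 * x^2 * (pd 1 \<tau> (t,x,u) + pd 2 \<tau> (t,x,u)) = 0" using S[where a=1 and b=0 and c=1] S[where a=1 and b=0 and c=0] by linarith
  then have 2: "pd 2 \<tau> (t,x,u) = 0" using assms 1 by simp
  show ?thesis using 1 2 by simp
qed

lemma jet_xi:
  assumes "is_inf_symmetry \<sigma> k \<alpha> lam \<tau> \<xi> \<phi>" "0 < x" "0 < \<sigma>"
    and t: "pd 1 \<tau> (t,x,u) = 0" "pd 2 \<tau> (t,x,u) = 0" "ipd [1,1] \<tau> (t,x,u) = 0"
       "ipd [1,2] \<tau> (t,x,u) = 0" "ipd [2,2] \<tau> (t,x,u) = 0"
  shows "pd 2 \<xi> (t,x,u) = 0"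
proof -
  let ?S = "\<lambda>ux uxx uxt. prV_Delta \<sigma> k \<alpha> lam \<tau> \<xi> \<phi> (t,x,u)
     (1/2 * \<sigma>^2 * x^2 * uxx + k * x * (\<alpha> - x) * ux + lam * x^2 * u) ux uxx uxt"
  have S: "\<And>a b c. ?S a b c = 0" using S0[OF assms(1,2)] by blast
  have "?S 1 1 0 - ?S 1 0 0 - ?S 0 1 0 + ?S 0 0 0 = -(\<sigma>^2 * x^2 * pd 2 \<xi> (t,x,u))"
    using t by (simp add: prV_Delta_def phi_t_def phi_x_def phi_xx_def algebra_simps)
  then have "\<sigma>^2 * x^2 * pd 2 \<xi> (t,x,u) = 0" using S[where a=1 and b=1 and c=0] S[where a=1 and b=0 and c=0] S[where a=0 and b=1 and c=0] S[where a=0 and b=0 and c=0] by linarith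
  then show ?thesis using assms by simp
qed

lemma jet_rest:
  assumes "is_inf_symmetry \<sigma> k \<alpha> lam \<tau> \<xi> \<phi>" "0 < x" "0 < \<sigma>"
    and t: "pd 1 \<tau> (t,x,u) = 0" "pd 2 \<tau> (t,x,u) = 0" "ipd [1,1] \<tau> (t,x,u) = 0"
       "ipd [1,2] \<tau> (t,x,u) = 0" "ipd [2,2] \<tau> (t,x,u) = 0"
    and xi: "pd 2 \<xi> (t,x,u) = 0" "ipd [1,2] \<xi> (t,x,u) = 0" "ipd [2,2] \<xi> (t,x,u) = 0"
  shows "ipd [2,2] \<phi> (t,x,u) = 0"
    and "\<xi> (t,x,u) - x * pd 1 \<xi> (t,x,u) + x * pd 0 \<tau> (t,x,u) / 2 = 0"
    and "\<xi> (t,x,u) * k * (\<alpha> - 2*x) + pd 0 \<xi> (t,x,u) + pd 0 \<tau> (t,x,u) * k*x*(\<alpha>-x)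
          - pd 1 \<xi> (t,x,u) * k*x*(\<alpha>-x)
          + \<sigma>^2*x^2/2 * (2*ipd [1,2] \<phi> (t,x,u) - ipd [1,1] \<xi> (t,x,u)) = 0"
    and "2*lam*x*u*\<xi> (t,x,u) + \<phi> (t,x,u)*lam*x^2 - pd 0 \<phi> (t,x,u)
          - (pd 2 \<phi> (t,x,u) - pd 0 \<tau> (t,x,u))*lam*x^2*u + k*x*(\<alpha>-x)*pd 1 \<phi> (t,x,u)
          + \<sigma>^2*x^2/2 * ipd [1,1] \<phi> (t,x,u) = 0"
proof -
  let ?S = "\<lambda>ux uxx uxt. prV_Delta \<sigma> k \<alpha> lam \<tau> \<xi> \<phi> (t,x,u)
     (1/2 * \<sigma>^2 * x^2 * uxx + k * x * (\<alpha> - x) * ux + lam * x^2 * u) ux uxx uxt"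
  have S: "\<And>a b c. ?S a b c = 0" using S0[OF assms(1,2)] by blast
  have "?S 1 0 0 + ?S (-1) 0 0 - 2 * ?S 0 0 0 = \<sigma>^2 * x^2 * ipd [2,2] \<phi> (t,x,u)"
    using t xi by (simp add: prV_Delta_def phi_t_def phi_x_def phi_xx_def algebra_simps)
  then have "\<sigma>^2 * x^2 * ipd [2,2] \<phi> (t,x,u) = 0"
    using S[where a=1 and b=0 and c=0] S[where a="-1" and b=0 and c=0] S[where a=0 and b=0 and c=0] by linarith
  then show "ipd [2,2] \<phi> (t,x,u) = 0" using assms by simp
  have "?S 0 1 0 - ?S 0 0 0 = \<sigma>^2 * x * (\<xi> (t,x,u) - x * pd 1 \<xi> (t,x,u) + x * pd 0 \<tau> (t,x,u) / 2)"
    using t xi by (simp add: prV_Delta_def phi_t_def phi_x_def phi_xx_def algebra_simps power2_eq_square)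
  then have "\<sigma>^2 * x * (\<xi> (t,x,u) - x * pd 1 \<xi> (t,x,u) + x * pd 0 \<tau> (t,x,u) / 2) = 0"
    using S[where a=0 and b=1 and c=0] S[where a=0 and b=0 and c=0] by linarith
  then show "\<xi> (t,x,u) - x * pd 1 \<xi> (t,x,u) + x * pd 0 \<tau> (t,x,u) / 2 = 0" using assms by simp
  have "?S 1 0 0 - ?S (-1) 0 0 = 2 * (\<xi> (t,x,u) * k * (\<alpha> - 2*x) + pd 0 \<xi> (t,x,u) + pd 0 \<tau> (t,x,u) * k*x*(\<alpha>-x)
          - pd 1 \<xi> (t,x,u) * k*x*(\<alpha>-x)
          + \<sigma>^2*x^2/2 * (2*ipd [1,2] \<phi> (t,x,u) - ipd [1,1] \<xi> (t,x,u)))" (is "_ = 2 * ?E")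
    using t xi by (simp add: prV_Delta_def phi_t_def phi_x_def phi_xx_def algebra_simps power2_eq_square)
  then have "2 * ?E = 0" using S[where a=1 and b=0 and c=0] S[where a="-1" and b=0 and c=0] by linarith
  then show "\<xi> (t,x,u) * k * (\<alpha> - 2*x) + pd 0 \<xi> (t,x,u) + pd 0 \<tau> (t,x,u) * k*x*(\<alpha>-x)
          - pd 1 \<xi> (t,x,u) * k*x*(\<alpha>-x)
          + \<sigma>^2*x^2/2 * (2*ipd [1,2] \<phi> (t,x,u) - ipd [1,1] \<xi> (t,x,u)) = 0"
    by simp
  have "?S 0 0 0 = 2*lam*x*u*\<xi> (t,x,u) + \<phi> (t,x,u)*lam*x^2 - pd 0 \<phi> (t,x,u)
          - (pd 2 \<phi> (t,x,u) - pd 0 \<tau> (t,x,u))*lam*x^2*u + k*x*(\<alpha>-x)*pd 1 \<phi> (t,x,u)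
          + \<sigma>^2*x^2/2 * ipd [1,1] \<phi> (t,x,u)"
    using t xi by (simp add: prV_Delta_def phi_t_def phi_x_def phi_xx_def algebra_simps power2_eq_square)
  then show "2*lam*x*u*\<xi> (t,x,u) + \<phi> (t,x,u)*lam*x^2 - pd 0 \<phi> (t,x,u)
          - (pd 2 \<phi> (t,x,u) - pd 0 \<tau> (t,x,u))*lam*x^2*u + k*x*(\<alpha>-x)*pd 1 \<phi> (t,x,u)
          + \<sigma>^2*x^2/2 * ipd [1,1] \<phi> (t,x,u) = 0"
    using S[where a=0 and b=0 and c=0] by linarith
qed



lemma lim_zero_coef:
  fixes f :: "real \<Rightarrow> real"
  assumes "(f \<longlongrightarrow> c) at_top" "eventually (\<lambda>x. f x = 0) at_top"
  shows "c = 0"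
proof -
  have "((\<lambda>x::real. 0::real) \<longlongrightarrow> c) at_top"
    using assms(1) tendsto_cong[of f "\<lambda>x. 0" at_top c] assms(2) by simp
  then show ?thesis by (simp add: tendsto_const_iff)
qed

lemma coef:
  fixes c1 c2 c3 c4 c5 c6 c7 :: real
  assumes H: "\<And>x. 0 < x \<Longrightarrow> c1*x^2*ln x + c2*x^2 + c3*x*ln x + c4*x + c5*(ln x)^2 + c6*ln x + c7 = 0"
  shows "c1 = 0 \<and> c2 = 0 \<and> c3 = 0 \<and> c4 = 0"
proof -
  have ev: "eventually (\<lambda>x. c1*x^2*ln x + c2*x^2 + c3*x*ln x + c4*x + c5*(ln x)^2 + c6*ln x + c7 = 0) at_top"
    using eventually_gt_at_top[of 0] by eventually_elim (rule H)
  have 1: "c1 = 0"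
  proof (rule lim_zero_coef)
    show "((\<lambda>x. (c1*x^2*ln x + c2*x^2 + c3*x*ln x + c4*x + c5*(ln x)^2 + c6*ln x + c7) / (x^2 * ln x)) \<longlongrightarrow> c1) at_top"
      by real_asymp
    show "eventually (\<lambda>x. (c1*x^2*ln x + c2*x^2 + c3*x*ln x + c4*x + c5*(ln x)^2 + c6*ln x + c7) / (x^2 * ln x) = 0) at_top"
      using ev by eventually_elim simp
  qed
  have 2: "c2 = 0"
  proof (rule lim_zero_coef)
    show "((\<lambda>x. (c2*x^2 + c3*x*ln x + c4*x + c5*(ln x)^2 + c6*ln x + c7) / (x^2)) \<longlongrightarrow> c2) at_top"
      by real_asymp
    show "eventually (\<lambda>x. (c2*x^2 + c3*x*ln x + c4*x + c5*(ln x)^2 + c6*ln x + c7) / (x^2) = 0) at_top"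
      using ev by eventually_elim (simp add: 1)
  qed
  have 3: "c3 = 0"
  proof (rule lim_zero_coef)
    show "((\<lambda>x. (c3*x*ln x + c4*x + c5*(ln x)^2 + c6*ln x + c7) / (x * ln x)) \<longlongrightarrow> c3) at_top"
      by real_asymp
    show "eventually (\<lambda>x. (c3*x*ln x + c4*x + c5*(ln x)^2 + c6*ln x + c7) / (x * ln x) = 0) at_top"
      using ev by eventually_elim (simp add: 1 2)
  qed
  have 4: "c4 = 0"
  proof (rule lim_zero_coef)
    show "((\<lambda>x. (c4*x + c5*(ln x)^2 + c6*ln x + c7) / x) \<longlongrightarrow> c4) at_top"
      by real_asymp
    show "eventually (\<lambda>x. (c4*x + c5*(ln x)^2 + c6*ln x + c7) / x = 0) at_top"
      using ev by eventually_elim (simp add: 1 2 3)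
  qed
  show ?thesis using 1 2 3 4 by simp
qed



lemma along1[simp]: "along 1 (t,x,u) s = (t,s,u)" "coord 1 (t,x,u) = x"
  by (simp_all add: along_def coord_def)

lemma D0: "smooth_on Dom g \<Longrightarrow> 0 < x \<Longrightarrow> ((\<lambda>s. g (s,x,u)) has_real_derivative pd 0 g (t,x,u)) (at t)"
  using smooth_D0[of g x "[]"] by simp
lemma D1: "smooth_on Dom g \<Longrightarrow> 0 < x \<Longrightarrow> ((\<lambda>s. g (t,s,u)) has_real_derivative pd 1 g (t,x,u)) (at x)"
  using smooth_D1[of g x "[]"] by simp
lemma D2: "smooth_on Dom g \<Longrightarrow> 0 < x \<Longrightarrow> ((\<lambda>s. g (t,x,s)) has_real_derivative pd 2 g (t,x,u)) (at u)"
  using smooth_D2[of g x "[]"] by simp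
lemma D0j: "smooth_on Dom g \<Longrightarrow> 0 < x \<Longrightarrow> j \<in> {0,1,2} \<Longrightarrow> ((\<lambda>s. pd j g (s,x,u)) has_real_derivative pd 0 (pd j g) (t,x,u)) (at t)"
  using smooth_D0[of g x "[j]"] by simp
lemma D1j: "smooth_on Dom g \<Longrightarrow> 0 < x \<Longrightarrow> j \<in> {0,1,2} \<Longrightarrow> ((\<lambda>s. pd j g (t,s,u)) has_real_derivative pd 1 (pd j g) (t,x,u)) (at x)"
  using smooth_D1[of g x "[j]"] by simp
lemma D2j: "smooth_on Dom g \<Longrightarrow> 0 < x \<Longrightarrow> j \<in> {0,1,2} \<Longrightarrow> ((\<lambda>s. pd j g (t,x,s)) has_real_derivative pd 2 (pd j g) (t,x,u)) (at u)"
  using smooth_D2[of g x "[j]"] by simp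
lemma D0ij: "smooth_on Dom g \<Longrightarrow> 0 < x \<Longrightarrow> j \<in> {0,1,2} \<Longrightarrow> i \<in> {0,1,2} \<Longrightarrow> ((\<lambda>s. pd i (pd j g) (s,x,u)) has_real_derivative pd 0 (pd i (pd j g)) (t,x,u)) (at t)"
  using smooth_D0[of g x "[i,j]"] by simp
lemma D1ij: "smooth_on Dom g \<Longrightarrow> 0 < x \<Longrightarrow> j \<in> {0,1,2} \<Longrightarrow> i \<in> {0,1,2} \<Longrightarrow> ((\<lambda>s. pd i (pd j g) (t,s,u)) has_real_derivative pd 1 (pd i (pd j g)) (t,x,u)) (at x)"
  using smooth_D1[of g x "[i,j]"] by simp



lemma comb3:
  fixes lam x X A B a p d0 dt d1 ax d11 axx ph0 :: real
  shows "2*lam*x*1*X + (ph0 + a)*lam*x^2 - (d0 + dt) - (a - p)*lam*x^2*1 + B*(d1 + ax) + A*(d11 + axx) = 0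
   \<Longrightarrow> 2*lam*x*0*X + ph0*lam*x^2 - d0 - (a - p)*lam*x^2*0 + B*d1 + A*d11 = 0
   \<Longrightarrow> 2*lam*x*X + lam*x^2*p - dt + B*ax + A*axx = 0"
  by (simp add: algebra_simps)

lemma forward_part1:
  fixes \<sigma> k \<alpha> lam :: real and \<tau> \<xi> \<phi> :: "pt \<Rightarrow> real"
  assumes sig: "\<sigma> > 0"
   and sm: "smooth_on Dom \<tau>" "smooth_on Dom \<xi>" "smooth_on Dom \<phi>"
   and sym: "is_inf_symmetry \<sigma> k \<alpha> lam \<tau> \<xi> \<phi>"
  shows "\<And>s y u. 0<y \<Longrightarrow> \<tau> (s,y,u) = \<tau> (s,1,0)"
   and "\<And>s y u. 0<y \<Longrightarrow> \<xi> (s,y,u) = \<xi> (s,y,0)"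
   and "\<And>s y u. 0<y \<Longrightarrow> \<phi> (s,y,u) = \<phi> (s,y,0) + u * pd 2 \<phi> (s,y,0)"
   and "\<And>t x. 0<x \<Longrightarrow> \<xi> (t,x,0) - x * pd 1 \<xi> (t,x,0) + x * pd 0 \<tau> (t,1,0) / 2 = 0"
   and "\<And>t x. 0<x \<Longrightarrow> \<xi> (t,x,0) * k * (\<alpha> - 2*x) + pd 0 \<xi> (t,x,0) + pd 0 \<tau> (t,1,0) * k*x*(\<alpha>-x)
          - pd 1 \<xi> (t,x,0) * k*x*(\<alpha>-x)
          + \<sigma>^2*x^2/2 * (2*pd 1 (pd 2 \<phi>) (t,x,0) - pd 1 (pd 1 \<xi>) (t,x,0)) = 0"
   and "\<And>t x. 0<x \<Longrightarrow> \<phi> (t,x,0)*lam*x^2 - pd 0 \<phi> (t,x,0)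
          + k*x*(\<alpha>-x)*pd 1 \<phi> (t,x,0) + \<sigma>^2*x^2/2 * pd 1 (pd 1 \<phi>) (t,x,0) = 0"
   and "\<And>t x. 0<x \<Longrightarrow> 2*lam*x*\<xi> (t,x,0) + lam*x^2*pd 0 \<tau> (t,1,0) - pd 0 (pd 2 \<phi>) (t,x,0)
          + k*x*(\<alpha>-x)*pd 1 (pd 2 \<phi>) (t,x,0) + \<sigma>^2*x^2/2 * pd 1 (pd 1 (pd 2 \<phi>)) (t,x,0) = 0"
proof -
  have T: "\<And>t x u. 0<x \<Longrightarrow> pd 1 \<tau> (t,x,u) = 0 \<and> pd 2 \<tau> (t,x,u) = 0"
    using jet_tau[OF sym _ sig] by blast
  have T1D: "\<forall>q\<in>Dom. pd 1 \<tau> q = 0" by (rule DomI) (use T in blast)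
  have T2D: "\<forall>q\<in>Dom. pd 2 \<tau> q = 0" by (rule DomI) (use T in blast)
  have TT: "\<And>t x u. 0<x \<Longrightarrow> ipd [1,1] \<tau> (t,x,u) = 0 \<and> ipd [1,2] \<tau> (t,x,u) = 0 \<and> ipd [2,2] \<tau> (t,x,u) = 0"
    using pd_zero[OF T1D] pd_zero[OF T2D] by simp
  have XI: "\<And>t x u. 0<x \<Longrightarrow> pd 2 \<xi> (t,x,u) = 0"
    using jet_xi[OF sym _ sig] T TT by blast
  have X2D: "\<forall>q\<in>Dom. pd 2 \<xi> q = 0" by (rule DomI) (use XI in blast)
  have XX: "\<And>t x u. 0<x \<Longrightarrow> ipd [1,2] \<xi> (t,x,u) = 0 \<and> ipd [2,2] \<xi> (t,x,u) = 0"
    using pd_zero[OF X2D] by simp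
  note JR = jet_rest[OF sym _ sig]
  have P22: "\<And>t x u. 0<x \<Longrightarrow> ipd [2,2] \<phi> (t,x,u) = 0"
    using JR(1) T TT XI XX by blast
  have E1: "\<And>t x u. 0<x \<Longrightarrow> \<xi> (t,x,u) - x * pd 1 \<xi> (t,x,u) + x * pd 0 \<tau> (t,x,u) / 2 = 0"
    using JR(2) T TT XI XX by blast
  have E2: "\<And>t x u. 0<x \<Longrightarrow> \<xi> (t,x,u) * k * (\<alpha> - 2*x) + pd 0 \<xi> (t,x,u) + pd 0 \<tau> (t,x,u) * k*x*(\<alpha>-x)
          - pd 1 \<xi> (t,x,u) * k*x*(\<alpha>-x)
          + \<sigma>^2*x^2/2 * (2*ipd [1,2] \<phi> (t,x,u) - ipd [1,1] \<xi> (t,x,u)) = 0"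
    using JR(3) T TT XI XX by blast
  have E3: "\<And>t x u. 0<x \<Longrightarrow> 2*lam*x*u*\<xi> (t,x,u) + \<phi> (t,x,u)*lam*x^2 - pd 0 \<phi> (t,x,u)
          - (pd 2 \<phi> (t,x,u) - pd 0 \<tau> (t,x,u))*lam*x^2*u + k*x*(\<alpha>-x)*pd 1 \<phi> (t,x,u)
          + \<sigma>^2*x^2/2 * ipd [1,1] \<phi> (t,x,u) = 0"
    using JR(4) T TT XI XX by blast
  show tau: "\<tau> (s,y,u) = \<tau> (s,1,0)" if y: "0<y" for s y u
  proof -
    have "\<tau> (s,y,u) = \<tau> (s,1,u)"
    proof (rule const_pos[where F="\<lambda>y. \<tau> (s,y,u)"])
      fix z :: real assume "0 < z"
      then show "((\<lambda>y. \<tau> (s,y,u)) has_real_derivative 0) (at z)"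
        using D1[OF sm(1), of z s u] T[of z s u] by simp
    qed (use y in auto)
    also have "\<dots> = \<tau> (s,1,0)"
    proof (rule DERIV_isconst_all[where f="\<lambda>v. \<tau> (s,1,v)", rule_format])
      fix z :: real
      show "((\<lambda>v. \<tau> (s,1,v)) has_real_derivative 0) (at z)"
        using D2[OF sm(1), of 1 s z] T[of 1 s z] by simp
    qed
    finally show ?thesis .
  qed
  have ptau: "pd 0 \<tau> (t,x,u) = pd 0 \<tau> (t,1,0)" if "0<x" for t x u
  proof -
    have "(\<lambda>s. \<tau> (s,x,u)) = (\<lambda>s. \<tau> (s,1,0))" using tau[OF that] by auto
    then show ?thesis by (simp add: pd_def)
  qed
  show xi: "\<xi> (s,y,u) = \<xi> (s,y,0)" if y: "0<y" for s y u
  proof (rule DERIV_isconst_all[where f="\<lambda>v. \<xi> (s,y,v)", rule_format])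
    fix z :: real
    show "((\<lambda>v. \<xi> (s,y,v)) has_real_derivative 0) (at z)"
      using D2[OF sm(2) y, of s z] XI[OF y, of s z] by simp
  qed
  have phu: "pd 2 \<phi> (s,y,u) = pd 2 \<phi> (s,y,0)" if y: "0<y" for s y u
  proof (rule DERIV_isconst_all[where f="\<lambda>v. pd 2 \<phi> (s,y,v)", rule_format])
    fix z :: real
    show "((\<lambda>v. pd 2 \<phi> (s,y,v)) has_real_derivative 0) (at z)"
      using D2j[OF sm(3) y, of 2 s z] P22[OF y, of s z] by simp
  qed
  show phi: "\<phi> (s,y,u) = \<phi> (s,y,0) + u * pd 2 \<phi> (s,y,0)" if y: "0<y" for s y u
  proof -
    have "\<phi> (s,y,u) - u * pd 2 \<phi> (s,y,0) = \<phi> (s,y,0) - 0 * pd 2 \<phi> (s,y,0)"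
    proof (rule DERIV_isconst_all[where f="\<lambda>v. \<phi> (s,y,v) - v * pd 2 \<phi> (s,y,0)", rule_format])
      fix z :: real
      show "((\<lambda>v. \<phi> (s,y,v) - v * pd 2 \<phi> (s,y,0)) has_real_derivative 0) (at z)"
        using D2[OF sm(3) y, of s z] phu[OF y, of s z]
        by (auto intro!: derivative_eq_intros)
    qed
    then show ?thesis by simp
  qed
  show "\<xi> (t,x,0) - x * pd 1 \<xi> (t,x,0) + x * pd 0 \<tau> (t,1,0) / 2 = 0" if "0<x" for t x
    using E1[OF that, where t=t and u=0] ptau[OF that, where t=t and u=0] by simp
  show "\<xi> (t,x,0) * k * (\<alpha> - 2*x) + pd 0 \<xi> (t,x,0) + pd 0 \<tau> (t,1,0) * k*x*(\<alpha>-x)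
          - pd 1 \<xi> (t,x,0) * k*x*(\<alpha>-x)
          + \<sigma>^2*x^2/2 * (2*pd 1 (pd 2 \<phi>) (t,x,0) - pd 1 (pd 1 \<xi>) (t,x,0)) = 0" if "0<x" for t x
    using E2[OF that, where t=t and u=0] ptau[OF that, where t=t and u=0] by simp
  show "\<phi> (t,x,0)*lam*x^2 - pd 0 \<phi> (t,x,0)
          + k*x*(\<alpha>-x)*pd 1 \<phi> (t,x,0) + \<sigma>^2*x^2/2 * pd 1 (pd 1 \<phi>) (t,x,0) = 0" if "0<x" for t x
    using E3[OF that, where t=t and u=0] by simp
  show "2*lam*x*\<xi> (t,x,0) + lam*x^2*pd 0 \<tau> (t,1,0) - pd 0 (pd 2 \<phi>) (t,x,0)
          + k*x*(\<alpha>-x)*pd 1 (pd 2 \<phi>) (t,x,0) + \<sigma>^2*x^2/2 * pd 1 (pd 1 (pd 2 \<phi>)) (t,x,0) = 0" if x: "0<x" for t x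
  proof -
    have a0: "pd 0 \<phi> (t,x,1) = pd 0 \<phi> (t,x,0) + pd 0 (pd 2 \<phi>) (t,x,0)"
    proof (rule DERIV_unique[OF D0[OF sm(3) x, of 1 t]])
      have "(\<lambda>s. \<phi> (s,x,1)) = (\<lambda>s. \<phi> (s,x,0) + pd 2 \<phi> (s,x,0))" using phi[OF x, where u=1] by auto
      then show "((\<lambda>s. \<phi> (s,x,1)) has_real_derivative pd 0 \<phi> (t,x,0) + pd 0 (pd 2 \<phi>) (t,x,0)) (at t)"
        using D0[OF sm(3) x, of 0 t] D0j[OF sm(3) x, of 2 0 t] by (auto intro!: derivative_eq_intros)
    qed
    have a1: "pd 1 \<phi> (t,y,1) = pd 1 \<phi> (t,y,0) + pd 1 (pd 2 \<phi>) (t,y,0)" if y: "0<y" for y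
    proof (rule DERIV_local[OF D1[OF sm(3) y, of t 1]])
      show "((\<lambda>s. \<phi> (t,s,0) + pd 2 \<phi> (t,s,0)) has_real_derivative pd 1 \<phi> (t,y,0) + pd 1 (pd 2 \<phi>) (t,y,0)) (at y)"
        using D1[OF sm(3) y, of t 0] D1j[OF sm(3) y, of 2 t 0] by (auto intro!: derivative_eq_intros)
    qed (use phi[where u=1] y in auto)
    have a11: "pd 1 (pd 1 \<phi>) (t,x,1) = pd 1 (pd 1 \<phi>) (t,x,0) + pd 1 (pd 1 (pd 2 \<phi>)) (t,x,0)"
    proof (rule DERIV_local[OF D1j[OF sm(3) x, of 1 t 1]])
      show "((\<lambda>s. pd 1 \<phi> (t,s,0) + pd 1 (pd 2 \<phi>) (t,s,0)) has_real_derivative pd 1 (pd 1 \<phi>) (t,x,0) + pd 1 (pd 1 (pd 2 \<phi>)) (t,x,0)) (at x)"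
        using D1j[OF sm(3) x, of 1 t 0] D1ij[OF sm(3) x, of 2 1 t 0] by (auto intro!: derivative_eq_intros)
    qed (use a1 x in auto)
    have e1: "2*lam*x*1*\<xi> (t,x,1) + \<phi> (t,x,1)*lam*x^2 - pd 0 \<phi> (t,x,1)
          - (pd 2 \<phi> (t,x,1) - pd 0 \<tau> (t,x,1))*lam*x^2*1 + k*x*(\<alpha>-x)*pd 1 \<phi> (t,x,1)
          + \<sigma>^2*x^2/2 * ipd [1,1] \<phi> (t,x,1) = 0" by (rule E3[OF x])
    have e0: "2*lam*x*0*\<xi> (t,x,0) + \<phi> (t,x,0)*lam*x^2 - pd 0 \<phi> (t,x,0)
          - (pd 2 \<phi> (t,x,0) - pd 0 \<tau> (t,x,0))*lam*x^2*0 + k*x*(\<alpha>-x)*pd 1 \<phi> (t,x,0)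
          + \<sigma>^2*x^2/2 * ipd [1,1] \<phi> (t,x,0) = 0" by (rule E3[OF x])
    have "\<xi> (t,x,1) = \<xi> (t,x,0)" "\<phi> (t,x,1) = \<phi> (t,x,0) + pd 2 \<phi> (t,x,0)"
      "pd 2 \<phi> (t,x,1) = pd 2 \<phi> (t,x,0)" "pd 0 \<tau> (t,x,1) = pd 0 \<tau> (t,1,0)"
      using xi[OF x, where u=1] phi[OF x, where u=1] phu[OF x, where u=1] ptau[OF x, where u=1] by auto
    then have e1': "2*lam*x*1*\<xi> (t,x,0) + (\<phi> (t,x,0) + pd 2 \<phi> (t,x,0))*lam*x^2
       - (pd 0 \<phi> (t,x,0) + pd 0 (pd 2 \<phi>) (t,x,0)) - (pd 2 \<phi> (t,x,0) - pd 0 \<tau> (t,1,0))*lam*x^2*1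
       + (k*x*(\<alpha>-x))*(pd 1 \<phi> (t,x,0) + pd 1 (pd 2 \<phi>) (t,x,0))
       + (\<sigma>^2*x^2/2)*(pd 1 (pd 1 \<phi>) (t,x,0) + pd 1 (pd 1 (pd 2 \<phi>)) (t,x,0)) = 0"
      using e1 a0 a1[OF x] a11 by (simp only: ipd.simps)
    have e0': "2*lam*x*0*\<xi> (t,x,0) + \<phi> (t,x,0)*lam*x^2 - pd 0 \<phi> (t,x,0)
       - (pd 2 \<phi> (t,x,0) - pd 0 \<tau> (t,1,0))*lam*x^2*0 + (k*x*(\<alpha>-x))*pd 1 \<phi> (t,x,0)
       + (\<sigma>^2*x^2/2)*pd 1 (pd 1 \<phi>) (t,x,0) = 0"
      using e0 ptau[OF x, where u=0] by (simp only: ipd.simps)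
    show ?thesis using comb3[OF e1' e0'] .
  qed
qed



lemma forward_part2:
  fixes \<sigma> k \<alpha> lam :: real and \<tau> \<xi> \<phi> :: "pt \<Rightarrow> real"
  assumes sig: "\<sigma> > 0" and kp: "k > 0" and cond: "\<alpha> \<noteq> 0 \<or> lam \<noteq> k^2 / (2 * \<sigma>^2)"
   and sm: "smooth_on Dom \<tau>" "smooth_on Dom \<xi>" "smooth_on Dom \<phi>"
   and E1: "\<And>t x. 0<x \<Longrightarrow> \<xi> (t,x,0) - x * pd 1 \<xi> (t,x,0) + x * pd 0 \<tau> (t,1,0) / 2 = 0"
   and E2: "\<And>t x. 0<x \<Longrightarrow> \<xi> (t,x,0) * k * (\<alpha> - 2*x) + pd 0 \<xi> (t,x,0) + pd 0 \<tau> (t,1,0) * k*x*(\<alpha>-x)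
          - pd 1 \<xi> (t,x,0) * k*x*(\<alpha>-x)
          + \<sigma>^2*x^2/2 * (2*pd 1 (pd 2 \<phi>) (t,x,0) - pd 1 (pd 1 \<xi>) (t,x,0)) = 0"
   and E3u: "\<And>t x. 0<x \<Longrightarrow> 2*lam*x*\<xi> (t,x,0) + lam*x^2*pd 0 \<tau> (t,1,0) - pd 0 (pd 2 \<phi>) (t,x,0)
          + k*x*(\<alpha>-x)*pd 1 (pd 2 \<phi>) (t,x,0) + \<sigma>^2*x^2/2 * pd 1 (pd 1 (pd 2 \<phi>)) (t,x,0) = 0"
  shows "\<forall>t x. 0<x \<longrightarrow> pd 0 \<tau> (t,1,0) = 0 \<and> \<xi> (t,x,0) = 0 \<and> pd 1 (pd 2 \<phi>) (t,x,0) = 0 \<and> pd 0 (pd 2 \<phi>) (t,x,0) = 0"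
proof -
  define p where "p = (\<lambda>s. pd 0 \<tau> (s,1,0))"
  define q where "q = (\<lambda>s. pd 0 (pd 0 \<tau>) (s,1,0))"
  define r where "r = (\<lambda>s. pd 0 (pd 0 (pd 0 \<tau>)) (s,1,0))"
  define f where "f = (\<lambda>s. \<xi> (s,1,0))"
  define f1 where "f1 = (\<lambda>s. pd 0 \<xi> (s,1,0))"
  define f2 where "f2 = (\<lambda>s. pd 0 (pd 0 \<xi>) (s,1,0))"
  have one: "(0::real) < 1" by simp
  have dp: "\<And>s. (p has_real_derivative q s) (at s)"
    unfolding p_def q_def using D0j[OF sm(1) one, of 0 0] by simp
  have dq: "\<And>s. (q has_real_derivative r s) (at s)"
    unfolding r_def q_def using D0ij[OF sm(1) one, of 0 0 0] by simp
  have df: "\<And>s. (f has_real_derivative f1 s) (at s)"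
    unfolding f_def f1_def using D0[OF sm(2) one, of 0] by simp
  have df1: "\<And>s. (f1 has_real_derivative f2 s) (at s)"
    unfolding f1_def f2_def using D0j[OF sm(2) one, of 0 0] by simp
  have dp': "\<And>s. ((\<lambda>s. p s) has_real_derivative q s) (at s)" using dp by simp
  have dq': "\<And>s. ((\<lambda>s. q s) has_real_derivative r s) (at s)" using dq by simp
  have df': "\<And>s. ((\<lambda>s. f s) has_real_derivative f1 s) (at s)" using df by simp
  have df1': "\<And>s. ((\<lambda>s. f1 s) has_real_derivative f2 s) (at s)" using df1 by simp
  have E1': "\<And>t x. 0<x \<Longrightarrow> \<xi> (t,x,0) - x * pd 1 \<xi> (t,x,0) + x * p t / 2 = 0"
    using E1 unfolding p_def by simp
  have Xf: "\<xi> (t,y,0) = y * (p t * ln y / 2 + f t)" if y: "0 < y" for t y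
  proof -
    have "(\<lambda>y. \<xi> (t,y,0) / y - p t * ln y / 2) y = (\<lambda>y. \<xi> (t,y,0) / y - p t * ln y / 2) 1"
    proof (rule const_pos[where F="\<lambda>y. \<xi> (t,y,0) / y - p t * ln y / 2"])
      fix z :: real assume z: "0 < z"
      have "((\<lambda>y. \<xi> (t,y,0) / y - p t * ln y / 2) has_real_derivative
             (pd 1 \<xi> (t,z,0) * z - \<xi> (t,z,0) * 1) / (z * z) - p t * (1 / z) / 2) (at z)"
        using z D1[OF sm(2) z, of t 0] by (auto intro!: derivative_eq_intros)
      moreover have "(pd 1 \<xi> (t,z,0) * z - \<xi> (t,z,0) * 1) / (z * z) - p t * (1 / z) / 2 = 0"
      proof -
        have h: "pd 1 \<xi> (t,z,0) * z - \<xi> (t,z,0) * 1 = z * p t / 2"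
          using E1'[OF z, of t] by (simp add: algebra_simps)
        show ?thesis unfolding h using z by (simp add: field_simps)
      qed
      ultimately show "((\<lambda>y. \<xi> (t,y,0) / y - p t * ln y / 2) has_real_derivative 0) (at z)" by simp
    qed (use y in auto)
    then have "\<xi> (t,y,0) / y - p t * ln y / 2 = f t" by (simp add: f_def)
    then show ?thesis using y by (simp add: field_simps)
  qed
  have Xx: "pd 1 \<xi> (t,y,0) = p t * ln y / 2 + f t + p t / 2" if y: "0 < y" for t y
  proof -
    have "y * pd 1 \<xi> (t,y,0) = y * (p t * ln y / 2 + f t + p t / 2)"
      using E1'[OF y, of t] Xf[OF y, of t] by (simp add: algebra_simps)
    then show ?thesis using y by simp
  qed
  have Xxx: "pd 1 (pd 1 \<xi>) (t,y,0) = p t / (2 * y)" if y: "0 < y" for t y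
  proof -
    have "pd 1 (pd 1 \<xi>) (t,y,0) = p t * (1 / y) / 2"
    proof (rule DERIV_local[OF D1j[OF sm(2) y, of 1 t 0]])
      show "((\<lambda>s. p t * ln s / 2 + f t + p t / 2) has_real_derivative p t * (1 / y) / 2) (at y)"
        using y by (auto intro!: derivative_eq_intros)
    qed (use Xx y in auto)
    then show ?thesis by simp
  qed
  have Xt: "pd 0 \<xi> (t,x,0) = x * (q t * ln x / 2 + f1 t)" if x: "0 < x" for t x
  proof (rule DERIV_unique[OF D0[OF sm(2) x, of 0 t]])
    have "(\<lambda>s. \<xi> (s,x,0)) = (\<lambda>s. x * (p s * ln x / 2 + f s))" using Xf[OF x] by auto
    moreover have "((\<lambda>s. x * (p s * ln x / 2 + f s)) has_real_derivative x * (q t * ln x / 2 + f1 t)) (at t)"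
      by (auto intro!: derivative_eq_intros dp' df')
    ultimately show "((\<lambda>s. \<xi> (s,x,0)) has_real_derivative x * (q t * ln x / 2 + f1 t)) (at t)" by simp
  qed
  define c where "c = (\<lambda>s. \<sigma>^2*p s/4 - k*p s*\<alpha>/2 - f1 s)"
  define c' where "c' = (\<lambda>s. \<sigma>^2*q s/4 - k*q s*\<alpha>/2 - f2 s)"
  define P where "P = (\<lambda>s x. (k/\<sigma>^2)*(p s*ln x/2 + f s + p s/2) + (c s - q s*ln x/2)/(\<sigma>^2*x))"
  define Px where "Px = (\<lambda>s x. k*p s/(2*\<sigma>^2*x) + (-q s/2 - c s + q s*ln x/2)/(\<sigma>^2*x^2))"
  define Gf where "Gf = (\<lambda>s x. (k/\<sigma>^2)*(p s*x*ln x/2 + f s*x) + (c s*ln x - q s*(ln x)^2/4)/\<sigma>^2)"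
  define Gt where "Gt = (\<lambda>s x. (k/\<sigma>^2)*(q s*x*ln x/2 + f1 s*x) + (c' s*ln x - r s*(ln x)^2/4)/\<sigma>^2)"
  have ax: "pd 1 (pd 2 \<phi>) (t,x,0) = P t x" if x: "0 < x" for t x
  proof -
    have e: "\<sigma>^2*x^2 * pd 1 (pd 2 \<phi>) (t,x,0) = -(\<xi> (t,x,0) * k * (\<alpha> - 2*x) + pd 0 \<xi> (t,x,0) + p t * k*x*(\<alpha>-x)
          - pd 1 \<xi> (t,x,0) * k*x*(\<alpha>-x)) + \<sigma>^2*x^2/2 * pd 1 (pd 1 \<xi>) (t,x,0)"
      using E2[OF x, of t] unfolding p_def by (simp add: algebra_simps)
    have "\<sigma>^2*x^2 * pd 1 (pd 2 \<phi>) (t,x,0) = \<sigma>^2*x^2 * P t x"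
      unfolding e Xf[OF x] Xt[OF x] Xx[OF x] Xxx[OF x] P_def c_def
      using x sig by (simp add: field_simps power2_eq_square)
    then show ?thesis using x sig by simp
  qed
  have axx: "pd 1 (pd 1 (pd 2 \<phi>)) (t,x,0) = Px t x" if x: "0 < x" for t x
  proof (rule DERIV_local[OF D1ij[OF sm(3) x, of 2 1 t 0]])
    show "((\<lambda>y. P t y) has_real_derivative Px t x) (at x)"
      unfolding P_def Px_def using x sig
      by (auto intro!: derivative_eq_intros simp: field_simps power2_eq_square)
  qed (use ax x in auto)
  have dG: "((\<lambda>y. Gf t y) has_real_derivative P t z) (at z)" if z: "0 < z" for t z
    unfolding Gf_def P_def using z sig
    by (auto intro!: derivative_eq_intros simp: field_simps power2_eq_square)
  have af: "pd 2 \<phi> (t,x,0) = Gf t x + pd 2 \<phi> (t,1,0) - Gf t 1" if x: "0 < x" for t x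
  proof -
    have "(\<lambda>y. pd 2 \<phi> (t,y,0) - Gf t y) x = (\<lambda>y. pd 2 \<phi> (t,y,0) - Gf t y) 1"
    proof (rule const_pos[where F="\<lambda>y. pd 2 \<phi> (t,y,0) - Gf t y"])
      fix z :: real assume z: "0 < z"
      have "((\<lambda>y. pd 2 \<phi> (t,y,0) - Gf t y) has_real_derivative P t z - P t z) (at z)"
        using D1j[OF sm(3) z, of 2 t 0] ax[OF z, of t] dG[OF z, of t]
        by (auto intro!: derivative_eq_intros)
      then show "((\<lambda>y. pd 2 \<phi> (t,y,0) - Gf t y) has_real_derivative 0) (at z)" by simp
    qed (use x in auto)
    then show ?thesis by simp
  qed
  have dGt: "((\<lambda>s. Gf s y) has_real_derivative Gt t y) (at t)" for t y
    unfolding Gf_def Gt_def c_def c'_def using sig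
    by (auto intro!: derivative_eq_intros dp dq df df1 dp' dq' df' df1' simp: field_simps power2_eq_square)
  have at: "pd 0 (pd 2 \<phi>) (t,x,0) = Gt t x + pd 0 (pd 2 \<phi>) (t,1,0) - Gt t 1" if x: "0 < x" for t x
  proof (rule DERIV_unique[OF D0j[OF sm(3) x, of 2 0 t]])
    have eq: "(\<lambda>s. pd 2 \<phi> (s,x,0)) = (\<lambda>s. Gf s x + pd 2 \<phi> (s,1,0) - Gf s 1)" using af[OF x] by auto
    have d1: "((\<lambda>s. pd 2 \<phi> (s,1,0)) has_real_derivative pd 0 (pd 2 \<phi>) (t,1,0)) (at t)"
      using D0j[OF sm(3) one, of 2 0 t] by simp
    have "((\<lambda>s. Gf s x + pd 2 \<phi> (s,1,0) - Gf s 1) has_real_derivative Gt t x + pd 0 (pd 2 \<phi>) (t,1,0) - Gt t 1) (at t)"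
      by (intro DERIV_diff DERIV_add dGt d1)
    then show "((\<lambda>s. pd 2 \<phi> (s,x,0)) has_real_derivative Gt t x + pd 0 (pd 2 \<phi>) (t,1,0) - Gt t 1) (at t)"
      using eq by simp
  qed simp
  have PF: "p t = 0 \<and> f t = 0" for t
  proof -
    define K where "K = pd 0 (pd 2 \<phi>) (t,1,0) - Gt t 1"
    have poly: "(p t*(lam - k^2/(2*\<sigma>^2)))*x^2*ln x + ((2*lam - k^2/\<sigma>^2)*(f t + p t/2))*x^2
       + (\<alpha>*k^2*p t/(2*\<sigma>^2))*x*ln x + (k^2*\<alpha>*(f t+p t)/\<sigma>^2)*x + (r t/(4*\<sigma>^2))*(ln x)^2
       + (q t/4 - k*\<alpha>*q t/(2*\<sigma>^2) - c' t/\<sigma>^2)*ln x + (k*\<alpha>*c t/\<sigma>^2 - q t/4 - c t/2 - K) = 0"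
      if x: "0 < x" for x
    proof -
      have e0: "2*lam*x*\<xi> (t,x,0) + lam*x^2*p t - pd 0 (pd 2 \<phi>) (t,x,0)
            + k*x*(\<alpha>-x)*pd 1 (pd 2 \<phi>) (t,x,0) + \<sigma>^2*x^2/2 * pd 1 (pd 1 (pd 2 \<phi>)) (t,x,0) = 0"
        using E3u[OF x, of t] unfolding p_def by simp
      have e: "2*lam*x*(x * (p t * ln x / 2 + f t)) + lam*x^2*p t - (Gt t x + K)
            + k*x*(\<alpha>-x)*P t x + \<sigma>^2*x^2/2 * Px t x = 0"
        using e0 unfolding Xf[OF x] ax[OF x] axx[OF x] at[OF x] K_def by (simp add: algebra_simps)
      have "2*lam*x*(x * (p t * ln x / 2 + f t)) + lam*x^2*p t - (Gt t x + K)
            + k*x*(\<alpha>-x)*P t x + \<sigma>^2*x^2/2 * Px t x =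
         (p t*(lam - k^2/(2*\<sigma>^2)))*x^2*ln x + ((2*lam - k^2/\<sigma>^2)*(f t + p t/2))*x^2
       + (\<alpha>*k^2*p t/(2*\<sigma>^2))*x*ln x + (k^2*\<alpha>*(f t+p t)/\<sigma>^2)*x + (r t/(4*\<sigma>^2))*(ln x)^2
       + (q t/4 - k*\<alpha>*q t/(2*\<sigma>^2) - c' t/\<sigma>^2)*ln x + (k*\<alpha>*c t/\<sigma>^2 - q t/4 - c t/2 - K)"
        unfolding Gt_def P_def Px_def c_def c'_def using x sig
        by (simp add: field_simps power2_eq_square)
      then show ?thesis using e by simp
    qed
    have C: "p t*(lam - k^2/(2*\<sigma>^2)) = 0 \<and> (2*lam - k^2/\<sigma>^2)*(f t + p t/2) = 0
       \<and> \<alpha>*k^2*p t/(2*\<sigma>^2) = 0 \<and> k^2*\<alpha>*(f t+p t)/\<sigma>^2 = 0"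
      by (rule coef) (rule poly)
    have "p t = 0 \<and> f t = 0"
    proof (cases "\<alpha> = 0")
      case True
      then have l: "lam \<noteq> k^2/(2*\<sigma>^2)" using cond by simp
      then have l1: "lam - k^2/(2*\<sigma>^2) \<noteq> 0" by simp
      have l2: "2*lam - k^2/\<sigma>^2 \<noteq> 0"
      proof
        assume "2*lam - k^2/\<sigma>^2 = 0"
        then have "lam = k^2/(2*\<sigma>^2)" using sig by (simp add: field_simps)
        with l show False by simp
      qed
      have "p t = 0" using C l1 by simp
      moreover have "f t = 0" using C l2 \<open>p t = 0\<close> by simp
      ultimately show ?thesis by simp
    next
      case False
      have "p t = 0" using C False sig kp by simp
      moreover have "f t = 0" using C False sig kp \<open>p t = 0\<close> by simp
      ultimately show ?thesis by simp
    qed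
  then show ?thesis by simp
  qed
  have qz: "q t = 0" for t
  proof -
    have "((\<lambda>s. p s) has_real_derivative 0) (at t)" using PF by simp
    then show ?thesis using dp' by (rule DERIV_unique[symmetric])
  qed
  have f1z: "f1 t = 0" for t
  proof -
    have "((\<lambda>s. f s) has_real_derivative 0) (at t)" using PF by simp
    then show ?thesis using df' by (rule DERIV_unique[symmetric])
  qed
  show ?thesis
  proof (intro allI impI)
    fix t x :: real assume x: "0 < x"
    have 1: "pd 0 \<tau> (t,1,0) = 0" using PF[of t] by (simp add: p_def)
    have 2: "\<xi> (t,x,0) = 0" using Xf[OF x, of t] PF[of t] by simp
    have 3: "pd 1 (pd 2 \<phi>) (t,x,0) = 0" using ax[OF x, of t] PF[of t] qz[of t] f1z[of t]
      by (simp add: P_def c_def)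
    have 4: "pd 1 (pd 1 (pd 2 \<phi>)) (t,x,0) = 0" using axx[OF x, of t] PF[of t] qz[of t] f1z[of t]
      by (simp add: Px_def c_def)
    have 5: "pd 0 (pd 2 \<phi>) (t,x,0) = 0" using E3u[OF x, of t] 1 2 3 4 by simp
    show "pd 0 \<tau> (t,1,0) = 0 \<and> \<xi> (t,x,0) = 0 \<and> pd 1 (pd 2 \<phi>) (t,x,0) = 0 \<and> pd 0 (pd 2 \<phi>) (t,x,0) = 0"
      using 1 2 3 5 by simp
  qed
qed



lemma pd_const_on:
  assumes "\<forall>q\<in>Dom. f q = c" "p \<in> Dom"
  shows "pd i f p = 0"
proof -
  have "pd i f p = pd i (\<lambda>_. c) p" by (rule pd_cong[OF assms])
  also have "\<dots> = 0" by (simp add: pd_def)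
  finally show ?thesis .
qed

lemma proj_ipd:
  "set is \<subseteq> {0,1,2} \<Longrightarrow>
   ipd is (\<lambda>(t,x,u). g (t,x,0)) (t,x,u) = (if 2 \<in> set is then 0 else ipd is g (t,x,0))"
proof (induction "is" arbitrary: t x u)
  case Nil then show ?case by simp
next
  case (Cons i "is")
  have IH: "ipd is (\<lambda>(t,x,u). g (t,x,0)) = (\<lambda>(t',x',u'). if 2 \<in> set is then 0 else ipd is g (t',x',0))"
    using Cons by (auto intro!: ext)
  have i: "i = 0 \<or> i = 1 \<or> i = 2" using Cons.prems by auto
  show ?case
  proof (cases "2 \<in> set is")
    case True
    then show ?thesis by (simp add: IH pd_def)
  next
    case False
    then show ?thesis using i by (auto simp add: IH pd_def)
  qed
qed

lemma smooth_proj: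
  assumes "smooth_on Dom g"
  shows "smooth_on Dom (\<lambda>(t,x,u). g (t,x,0))"
  unfolding smooth_on_def
proof (intro allI impI conjI ballI)
  fix "is" :: "nat list" assume iss: "set is \<subseteq> {0,1,2}"
  have E: "ipd is (\<lambda>(t,x,u). g (t,x,0)) = (\<lambda>q. if 2 \<in> set is then 0 else ipd is g (fst q, fst (snd q), 0))"
    using proj_ipd[OF iss] by (auto intro!: ext)
  have cg: "continuous_on Dom (ipd is g)" using assms iss unfolding smooth_on_def by blast
  show "continuous_on Dom (ipd is (\<lambda>(t,x,u). g (t,x,0)))"
  proof (cases "2 \<in> set is")
    case True then show ?thesis unfolding E by simp
  next
    case False
    have "continuous_on Dom (\<lambda>q. ipd is g (fst q, fst (snd q), 0))"
      by (rule continuous_on_compose2[OF cg]) (auto intro!: continuous_intros simp: Dom_def)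
    then show ?thesis unfolding E using False by simp
  qed
  fix p i assume p: "p \<in> Dom" and i: "i < (3::nat)"
  obtain t x u where pe: "p = (t,x,u)" by (cases p) auto
  have x: "0 < x" using p pe by simp
  have dg: "\<And>j. j < 3 \<Longrightarrow> (\<lambda>s. ipd is g (along j (t,x,0) s)) differentiable (at (coord j (t,x,0)))"
    using assms iss x unfolding smooth_on_def by simp
  have i': "i = 0 \<or> i = 1 \<or> i = 2" using i by auto
  show "(\<lambda>s. ipd is (\<lambda>(t,x,u). g (t,x,0)) (along i p s)) differentiable (at (coord i p))"
  proof (cases "2 \<in> set is")
    case True then show ?thesis unfolding E by simp
  next
    case False
    show ?thesis
      using i' dg[of 0] dg[of 1] False unfolding E pe by (auto simp: along_def coord_def)
  qed
qed

lemma forward: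
  fixes \<sigma> k \<alpha> lam :: real and \<tau> \<xi> \<phi> :: "pt \<Rightarrow> real"
  assumes sig: "\<sigma> > 0" and kp: "k > 0" and cond: "\<alpha> \<noteq> 0 \<or> lam \<noteq> k^2 / (2 * \<sigma>^2)"
   and sm: "smooth_on Dom \<tau>" "smooth_on Dom \<xi>" "smooth_on Dom \<phi>"
   and sym: "is_inf_symmetry \<sigma> k \<alpha> lam \<tau> \<xi> \<phi>"
  shows "\<exists>c1 c6 :: real. \<exists>w. is_solution \<sigma> k \<alpha> lam w \<and>
                (\<forall>t x u. x > 0 \<longrightarrow>
                   \<tau> (t, x, u) = c1 \<and> \<xi> (t, x, u) = 0 \<and> \<phi> (t, x, u) = c6 * u + w t x)"
proof -
  note P1 = forward_part1[OF sig sm sym]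
  have Z: "\<forall>t x. 0<x \<longrightarrow> pd 0 \<tau> (t,1,0) = 0 \<and> \<xi> (t,x,0) = 0 \<and> pd 1 (pd 2 \<phi>) (t,x,0) = 0 \<and> pd 0 (pd 2 \<phi>) (t,x,0) = 0"
    by (rule forward_part2[OF sig kp cond sm P1(4) P1(5) P1(7)])
  have one: "(0::real) < 1" by simp
  have tau0: "\<tau> (t,1,0) = \<tau> (0,1,0)" for t
  proof (rule DERIV_isconst_all[where f="\<lambda>s. \<tau> (s,1,0)", rule_format])
    fix z :: real
    show "((\<lambda>s. \<tau> (s,1,0)) has_real_derivative 0) (at z)"
      using D0[OF sm(1) one, of 0 z] Z[rule_format, where t=z and x=1] by simp
  qed
  have a1: "pd 2 \<phi> (t,1,0) = pd 2 \<phi> (0,1,0)" for t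
  proof (rule DERIV_isconst_all[where f="\<lambda>s. pd 2 \<phi> (s,1,0)", rule_format])
    fix z :: real
    show "((\<lambda>s. pd 2 \<phi> (s,1,0)) has_real_derivative 0) (at z)"
      using D0j[OF sm(3) one, of 2 0 z] Z[rule_format, where t=z and x=1] by simp
  qed
  have ax: "pd 2 \<phi> (t,x,0) = pd 2 \<phi> (t,1,0)" if x: "0 < x" for t x
  proof (rule const_pos[where F="\<lambda>y. pd 2 \<phi> (t,y,0)"])
    fix z :: real assume z: "0 < z"
    show "((\<lambda>y. pd 2 \<phi> (t,y,0)) has_real_derivative 0) (at z)"
      using D1j[OF sm(3) z, of 2 t 0] Z[rule_format, where t=t and x=z] z by simp
  qed (use x in auto)
  define w where "w = (\<lambda>t x. \<phi> (t,x,0))"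
  have sol: "is_solution \<sigma> k \<alpha> lam w"
    unfolding is_solution_def Let_def
  proof (intro conjI allI impI)
    show "smooth_on Dom (\<lambda>(t, x, u). w t x)" unfolding w_def by (rule smooth_proj[OF sm(3)])
    fix t x u :: real assume x: "0 < x"
    have W: "(\<lambda>(t, x, u). w t x) = (\<lambda>(t,x,u). \<phi> (t,x,0))" by (simp add: w_def)
    have d0: "pd 0 (\<lambda>(t,x,u). \<phi> (t,x,0)) (t,x,u) = pd 0 \<phi> (t,x,0)"
      using proj_ipd[of "[0]" \<phi> t x u] by simp
    have d1: "pd 1 (\<lambda>(t,x,u). \<phi> (t,x,0)) (t,x,u) = pd 1 \<phi> (t,x,0)"
      using proj_ipd[of "[1]" \<phi> t x u] by simp
    have d11: "ipd [1,1] (\<lambda>(t,x,u). \<phi> (t,x,0)) (t,x,u) = ipd [1,1] \<phi> (t,x,0)"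
      using proj_ipd[of "[1,1]" \<phi> t x u] by simp
    show "Delta \<sigma> k \<alpha> lam x ((\<lambda>(t, x, u). w t x) (t, x, u)) (pd 0 (\<lambda>(t, x, u). w t x) (t, x, u))
         (pd 1 (\<lambda>(t, x, u). w t x) (t, x, u)) (ipd [1, 1] (\<lambda>(t, x, u). w t x) (t, x, u)) = 0"
      unfolding w_def d0 d1 d11 using P1(6)[OF x, of t]
      by (simp add: Delta_def algebra_simps)
  qed
  show ?thesis
  proof (intro exI conjI allI impI)
    show "is_solution \<sigma> k \<alpha> lam w" by (rule sol)
    fix t x u :: real assume x: "0 < x"
    show "\<tau> (t,x,u) = \<tau> (0,1,0)" using P1(1)[OF x, of t u] tau0[of t] by simp
    show "\<xi> (t,x,u) = 0" using P1(2)[OF x, of t u] Z[rule_format, where t=t and x=x] x by simp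
    show "\<phi> (t,x,u) = pd 2 \<phi> (0,1,0) * u + w t x"
      using P1(3)[OF x, of t u] ax[OF x, of t] a1[of t] by (simp add: w_def)
  qed
qed

lemma backward:
  fixes \<sigma> k \<alpha> lam :: real and \<tau> \<xi> \<phi> :: "pt \<Rightarrow> real"
  assumes sol: "is_solution \<sigma> k \<alpha> lam w"
   and H: "\<forall>t x u. x > 0 \<longrightarrow> \<tau> (t, x, u) = c1 \<and> \<xi> (t, x, u) = 0 \<and> \<phi> (t, x, u) = c6 * u + w t x"
  shows "is_inf_symmetry \<sigma> k \<alpha> lam \<tau> \<xi> \<phi>"
  unfolding is_inf_symmetry_def
proof (intro allI impI)
  define W where "W = (\<lambda>(t::real, x::real, u::real). w t x)"
  have smW: "smooth_on Dom W" and eqW: "\<And>t x u. 0 < x \<Longrightarrow> Delta \<sigma> k \<alpha> lam x (W (t,x,u)) (pd 0 W (t,x,u)) (pd 1 W (t,x,u)) (ipd [1,1] W (t,x,u)) = 0"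
    using sol unfolding is_solution_def Let_def W_def by auto
  have Wv: "W (t,x,u) = w t x" for t x u by (simp add: W_def)
  have tD: "\<forall>q\<in>Dom. \<tau> q = c1" by (rule DomI) (use H in auto)
  have xD: "\<forall>q\<in>Dom. \<xi> q = 0" by (rule DomI) (use H in auto)
  have tz: "\<forall>q\<in>Dom. pd i \<tau> q = 0" for i using pd_const_on[OF tD] by auto
  have xz: "\<forall>q\<in>Dom. pd i \<xi> q = 0" for i using pd_const_on[OF xD] by auto
  have p2: "pd 2 \<phi> (t,x,u) = c6" if x: "0 < x" for t x u
  proof -
    have "(\<lambda>s. \<phi> (t,x,s)) = (\<lambda>s. c6 * s + w t x)" using H x by auto
    moreover have "((\<lambda>s. c6 * s + w t x) has_real_derivative c6) (at u)"
      by (auto intro!: derivative_eq_intros)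
    ultimately show ?thesis by (simp add: pd_def DERIV_imp_deriv)
  qed
  have p2D: "\<forall>q\<in>Dom. pd 2 \<phi> q = c6" by (rule DomI) (use p2 in auto)
  have p0: "pd 0 \<phi> (t,x,u) = pd 0 W (t,x,u)" if x: "0 < x" for t x u
  proof -
    have "(\<lambda>s. \<phi> (s,x,u)) = (\<lambda>s. c6 * u + W (s,x,u))" using H x by (auto simp: Wv)
    moreover have "((\<lambda>s. c6 * u + W (s,x,u)) has_real_derivative pd 0 W (t,x,u)) (at t)"
      using D0[OF smW x, of u t] by (auto intro!: derivative_eq_intros)
    ultimately show ?thesis by (simp add: pd_def DERIV_imp_deriv)
  qed
  have p1: "pd 1 \<phi> (t,x,u) = pd 1 W (t,x,u)" if x: "0 < x" for t x u
  proof -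
    have "((\<lambda>s. c6 * u + W (t,s,u)) has_real_derivative pd 1 W (t,x,u)) (at x)"
      using D1[OF smW x, of t u] by (auto intro!: derivative_eq_intros)
    then have "((\<lambda>s. \<phi> (t,s,u)) has_real_derivative pd 1 W (t,x,u)) (at x)"
      by (rule has_field_derivative_transform_within_open[where S="{0<..}"]) (use x H in \<open>auto simp: Wv\<close>)
    then show ?thesis by (simp add: pd_def DERIV_imp_deriv)
  qed
  have p1D: "\<forall>q\<in>Dom. pd 1 \<phi> q = pd 1 W q" by (rule DomI) (use p1 in auto)
  fix t x u ut ux uxx uxt :: real
  assume x: "0 < x" and D: "Delta \<sigma> k \<alpha> lam x u ut ux uxx = 0"
  have xin: "(t,x,u) \<in> Dom" using x by simp
  have f: "\<tau> (t,x,u) = c1" "\<xi> (t,x,u) = 0" "\<phi> (t,x,u) = c6 * u + W (t,x,u)" using H x by (auto simp: Wv)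
  have z: "pd i \<tau> (t,x,u) = 0" "pd i \<xi> (t,x,u) = 0" "pd j (pd i \<tau>) (t,x,u) = 0" "pd j (pd i \<xi>) (t,x,u) = 0"
    "pd j (pd 2 \<phi>) (t,x,u) = 0" for i j
    using tz xz xin pd_zero[OF tz xin] pd_zero[OF xz xin] pd_const_on[OF p2D xin] by auto
  have p11: "pd 1 (pd 1 \<phi>) (t,x,u) = pd 1 (pd 1 W) (t,x,u)" by (rule pd_cong[OF p1D xin])
  have "prV_Delta \<sigma> k \<alpha> lam \<tau> \<xi> \<phi> (t,x,u) ut ux uxx uxt
     = c6 * Delta \<sigma> k \<alpha> lam x u ut ux uxx + Delta \<sigma> k \<alpha> lam x (W (t,x,u)) (pd 0 W (t,x,u)) (pd 1 W (t,x,u)) (ipd [1,1] W (t,x,u))"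
    unfolding prV_Delta_def phi_t_def phi_x_def phi_xx_def Delta_def
    using f z p11 p0[OF x] p1[OF x] p2[OF x] by (simp add: algebra_simps)
  then show "prV_Delta \<sigma> k \<alpha> lam \<tau> \<xi> \<phi> (t,x,u) ut ux uxx uxt = 0"
    using D eqW[OF x] by simp
qed

theorem proposition2p2:
  fixes \<sigma> k \<alpha> lam :: real
  assumes "\<sigma> > 0" and "k > 0" and "\<alpha> \<ge> 0"
    and "\<alpha> \<noteq> 0 \<or> lam \<noteq> k^2 / (2 * \<sigma>^2)"
  shows "\<forall>\<tau> \<xi> \<phi> :: pt \<Rightarrow> real.
           smooth_on Dom \<tau> \<and> smooth_on Dom \<xi> \<and> smooth_on Dom \<phi> \<longrightarrow>
           (is_inf_symmetry \<sigma> k \<alpha> lam \<tau> \<xi> \<phi> \<longleftrightarrow>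
             (\<exists>c1 c6 :: real. \<exists>w. is_solution \<sigma> k \<alpha> lam w \<and>
                (\<forall>t x u. x > 0 \<longrightarrow>
                   \<tau> (t, x, u) = c1 \<and> \<xi> (t, x, u) = 0 \<and> \<phi> (t, x, u) = c6 * u + w t x)))"
  using forward[OF assms(1,2,4)] backward by blast


end
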